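(* Let $b,c\ge 0$ and consider the system $$\dot x=x(1-y+cx),\qquad \dot y=y(-1+x),\qquad \dot z=-bz.$$ Let $f\in\mathbb{C}[x,y,z]$ be an irreducible Darboux polynomial of degree greater than one with cofactor $k=\alpha_0+\alpha_1x+\alpha_2y+\alpha_3z$, $\alpha_i\in\mathbb{C}$. Then $\alpha_0=\alpha_1=\alpha_2=\alpha_3=0$.
   Context: A Darboux polynomial of the vector field $x(1-y+cx)\partial_x+y(-1+x)\partial_y-bz\partial_z$ is a polynomial $f$ with $x(1-y+cx)f_x+y(-1+x)f_y-bzf_z=kf$ for a polynomial cofactor $k$ (here of degree at most one). *)

theory Defs
  imports Complex_Main "HOL-Computational_Algebra.Polynomial"
begin

text \<open>C[x,y,z] is represented as complex poly poly poly: the outermost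
variable is z, the middle one y, the innermost one x.\<close>

type_synonym cpoly3 = "complex poly poly poly"

definition PX :: cpoly3 where "PX = [:[:[:0, 1:]:]:]"
definition PY :: cpoly3 where "PY = [:[:0, 1:]:]"
definition PZ :: cpoly3 where "PZ = [:0, 1:]"
definition cst :: "complex \<Rightarrow> cpoly3" where "cst a = [:[:[:a:]:]:]"

definition dX :: "cpoly3 \<Rightarrow> cpoly3" where "dX f = map_poly (map_poly pderiv) f"
definition dY :: "cpoly3 \<Rightarrow> cpoly3" where "dY f = map_poly pderiv f"
definition dZ :: "cpoly3 \<Rightarrow> cpoly3" where "dZ f = pderiv f"

text \<open>Total degree (degree of the zero polynomial is 0).\<close>
definition tdeg2 :: "complex poly poly \<Rightarrow> nat" where
  "tdeg2 p = Max ({0} \<union> {j + degree (coeff p j) | j. coeff p j \<noteq> 0})"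
definition tdeg :: "cpoly3 \<Rightarrow> nat" where
  "tdeg f = Max ({0} \<union> {k + tdeg2 (coeff f k) | k. coeff f k \<noteq> 0})"

end

theory Submission
  imports Defs
begin

definition FF :: "cpoly3 \<Rightarrow> nat \<Rightarrow> nat \<Rightarrow> nat \<Rightarrow> complex" where
  "FF p i j l = coeff (coeff (coeff p l) j) i"

lemma FF_add[simp]: "FF (p + q) i j l = FF p i j l + FF q i j l"
  by (simp add: FF_def)
lemma FF_diff[simp]: "FF (p - q) i j l = FF p i j l - FF q i j l"
  by (simp add: FF_def)
lemma FF_cst[simp]: "FF (cst a * p) i j l = a * FF p i j l"
  by (simp add: FF_def cst_def)
lemma FF_PX[simp]: "FF (PX * p) i j l = (if i = 0 then 0 else FF p (i - 1) j l)"
  by (simp add: FF_def PX_def coeff_pCons split: nat.split)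
lemma FF_PY[simp]: "FF (PY * p) i j l = (if j = 0 then 0 else FF p i (j - 1) l)"
  by (simp add: FF_def PY_def coeff_pCons split: nat.split)
lemma FF_PZ[simp]: "FF (PZ * p) i j l = (if l = 0 then 0 else FF p i j (l - 1))"
  by (simp add: FF_def PZ_def coeff_pCons split: nat.split)
lemma cz1: "coeff [:0, x:] j = (if j = 1 then x else 0)"
  by (cases j) (auto simp: coeff_pCons split: nat.split)
lemma cz0: "coeff [:x:] j = (if j = 0 then x else 0)"
  by (cases j) auto

lemma FF_dX[simp]: "FF (dX p) i j l = of_nat (Suc i) * FF p (Suc i) j l"
  by (simp add: FF_def dX_def coeff_map_poly coeff_pderiv)
lemma FF_dY[simp]: "FF (dY p) i j l = of_nat (Suc j) * FF p i (Suc j) l"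
  by (simp add: FF_def dY_def coeff_map_poly coeff_pderiv of_nat_mult_conv_smult del: of_nat_Suc)
lemma FF_dZ[simp]: "FF (dZ p) i j l = of_nat (Suc l) * FF p i j (Suc l)"
  by (simp add: FF_def dZ_def coeff_pderiv of_nat_mult_conv_smult del: of_nat_Suc)

lemma FF_eq: "(\<And>i j l. FF p i j l = FF q i j l) \<Longrightarrow> p = q"
  by (simp add: FF_def poly_eq_iff)

lemma FF_big_l: "l > degree p \<Longrightarrow> FF p i j l = 0"
  by (simp add: FF_def coeff_eq_0)
lemma FF_big_j: "j > degree (coeff p l) \<Longrightarrow> FF p i j l = 0"
  by (simp add: FF_def coeff_eq_0)

lemma unit_cpoly3: "is_unit (g::cpoly3) \<Longrightarrow> \<exists>a. a \<noteq> 0 \<and> g = cst a"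
  by (auto simp: is_unit_poly_iff cst_def)

lemma tdeg_PX: "a \<noteq> 0 \<Longrightarrow> tdeg (PX * cst a) = 1"
proof -
  assume a: "a \<noteq> 0"
  have e: "PX * cst a = [:[:[:0, a:]:]:]" by (simp add: PX_def cst_def)
  have t2: "tdeg2 [:[:0, a:]:] = 1"
  proof -
    have "{j + degree (coeff [:[:0, a:]:] j) | j. coeff [:[:0, a:]:] j \<noteq> 0} = {1}"
      using a by (auto simp: cz0 cz1)
    then show ?thesis by (simp add: tdeg2_def)
  qed
  have "{k + tdeg2 (coeff [:[:[:0, a:]:]:] k) | k. coeff [:[:[:0, a:]:]:] k \<noteq> 0} = {1}"
    using a t2 by (auto simp: cz0 cz1)
  then show ?thesis by (simp add: tdeg_def e)
qed

lemma tdeg_PY: "a \<noteq> 0 \<Longrightarrow> tdeg (PY * cst a) = 1"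
proof -
  assume a: "a \<noteq> 0"
  have e: "PY * cst a = [:[:0, [:a:]:]:]" by (simp add: PY_def cst_def)
  have t2: "tdeg2 [:0, [:a:]:] = 1"
  proof -
    have "{j + degree (coeff [:0, [:a:]:] j) | j. coeff [:0, [:a:]:] j \<noteq> 0} = {1}"
      using a by (auto simp: cz0 cz1)
    then show ?thesis by (simp add: tdeg2_def)
  qed
  have "{k + tdeg2 (coeff [:[:0, [:a:]:]:] k) | k. coeff [:[:0, [:a:]:]:] k \<noteq> 0} = {1}"
    using a t2 by (auto simp: cz0 cz1)
  then show ?thesis by (simp add: tdeg_def e)
qed

lemma tdeg_PZ: "a \<noteq> 0 \<Longrightarrow> tdeg (PZ * cst a) = 1"
proof -
  assume a: "a \<noteq> 0"
  have e: "PZ * cst a = [:0, [:[:a:]:]:]" by (simp add: PZ_def cst_def)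
  have t2: "tdeg2 [:[:a:]:] = 0"
  proof -
    have "{j + degree (coeff [:[:a:]:] j) | j. coeff [:[:a:]:] j \<noteq> 0} = {0}"
      using a by (auto simp: cz0 cz1)
    then show ?thesis by (simp add: tdeg2_def)
  qed
  have "{k + tdeg2 (coeff [:0, [:[:a:]:]:] k) | k. coeff [:0, [:[:a:]:]:] k \<noteq> 0} = {1}"
    using a t2 by (auto simp: cz0 cz1)
  then show ?thesis by (simp add: tdeg_def e)
qed

lemma not_unit_PX: "\<not> is_unit PX"
  by (auto simp: is_unit_poly_iff PX_def)
lemma not_unit_PY: "\<not> is_unit PY"
  by (auto simp: is_unit_poly_iff PY_def)
lemma not_unit_PZ: "\<not> is_unit PZ"
  by (auto simp: is_unit_poly_iff PZ_def)

lemma irred_factor: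
  assumes "irreducible f" "tdeg f > 1" "f = P * g" "\<not> is_unit P"
    and "\<And>a. a \<noteq> 0 \<Longrightarrow> tdeg (P * cst a) = 1"
  shows False
proof -
  have "is_unit P \<or> is_unit g" using assms(1,3) irreducibleD by blast
  then have "is_unit g" using assms(4) by blast
  then obtain a where "a \<noteq> 0" "g = cst a" using unit_cpoly3 by blast
  then show False using assms by auto
qed

lemma eqE:
  fixes b c :: real and f :: cpoly3 and a0 a1 a2 a3 :: complex
  assumes "PX * (1 - PY + cst (complex_of_real c) * PX) * dX f + PY * (PX - 1) * dY f
           - cst (complex_of_real b) * PZ * dZ f
         = (cst a0 + cst a1 * PX + cst a2 * PY + cst a3 * PZ) * f"
  shows "(of_nat i - of_nat j - complex_of_real b * of_nat l - a0) * FF f i j l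
     + (if i = 0 then 0 else (complex_of_real c * of_nat (i - 1) + of_nat j - a1) * FF f (i - 1) j l)
     - (if j = 0 then 0 else (of_nat i + a2) * FF f i (j - 1) l)
     - (if l = 0 then 0 else a3 * FF f i j (l - 1)) = 0"
proof -
  let ?b = "complex_of_real b" and ?c = "complex_of_real c"
  have L: "PX * (1 - PY + cst ?c * PX) * dX f + PY * (PX - 1) * dY f - cst ?b * PZ * dZ f
     = PX * dX f - PY * (PX * dX f) + cst ?c * (PX * (PX * dX f)) + PY * (PX * dY f) - PY * dY f
       - cst ?b * (PZ * dZ f)" by (simp add: algebra_simps)
  have R: "(cst a0 + cst a1 * PX + cst a2 * PY + cst a3 * PZ) * f
     = cst a0 * f + cst a1 * (PX * f) + cst a2 * (PY * f) + cst a3 * (PZ * f)"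
    by (simp add: algebra_simps)
  have h: "FF (PX * dX f - PY * (PX * dX f) + cst ?c * (PX * (PX * dX f)) + PY * (PX * dY f) - PY * dY f
       - cst ?b * (PZ * dZ f)) i j l = FF (cst a0 * f + cst a1 * (PX * f) + cst a2 * (PY * f) + cst a3 * (PZ * f)) i j l"
    using assms L R by metis
  consider "i = 0" | "i = 1" | k where "i = Suc (Suc k)"
    by (metis One_nat_def not0_implies_Suc)
  then show ?thesis
  proof cases
    case 1 then show ?thesis using h by (cases j; cases l) (simp_all, (simp_all add: algebra_simps)?)
  next
    case 2 then show ?thesis using h by (cases j; cases l) (simp_all, (simp_all add: algebra_simps)?)
  next
    case 3 then show ?thesis using h by (cases j; cases l) (simp_all, (simp_all add: algebra_simps)?)
  qed
qed

lemma ex_coeff: "p \<noteq> 0 \<Longrightarrow> \<exists>i. coeff p i \<noteq> 0"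
  using leading_coeff_neq_0 by blast

theorem lemma4p1:
  fixes b c :: real and f :: cpoly3 and a0 a1 a2 a3 :: complex
  assumes "b \<ge> 0" and "c \<ge> 0"
    and "irreducible f"
    and "tdeg f > 1"
    and "PX * (1 - PY + cst (complex_of_real c) * PX) * dX f + PY * (PX - 1) * dY f
           - cst (complex_of_real b) * PZ * dZ f
         = (cst a0 + cst a1 * PX + cst a2 * PY + cst a3 * PZ) * f"
  shows "a0 = 0 \<and> a1 = 0 \<and> a2 = 0 \<and> a3 = 0"
proof -
  let ?b = "complex_of_real b"
  note E = eqE[OF assms(5)]
  have f0: "f \<noteq> 0" using assms(3) by (simp add: irreducible_def)
  have nx: "\<exists>j l. FF f 0 j l \<noteq> 0"
  proof (rule ccontr)
    assume "\<not> ?thesis"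
    hence z: "\<And>j l. FF f 0 j l = 0" by auto
    let ?g = "map_poly (map_poly (poly_shift 1)) f"
    have "f = PX * ?g"
    proof (rule FF_eq)
      fix i j l
      show "FF f i j l = FF (PX * ?g) i j l"
      proof (cases i)
        case 0 thus ?thesis using z by simp
      next
        case (Suc k) thus ?thesis
          by (simp only: FF_PX) (simp add: FF_def coeff_map_poly coeff_poly_shift)
      qed
    qed
    then show False using irred_factor[OF assms(3,4) _ not_unit_PX tdeg_PX] by blast
  qed
  have ny: "\<exists>i l. FF f i 0 l \<noteq> 0"
  proof (rule ccontr)
    assume "\<not> ?thesis"
    hence z: "\<And>i l. FF f i 0 l = 0" by auto
    let ?g = "map_poly (poly_shift 1) f"
    have "f = PY * ?g"
    proof (rule FF_eq)
      fix i j l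
      show "FF f i j l = FF (PY * ?g) i j l"
      proof (cases j)
        case 0 thus ?thesis using z by simp
      next
        case (Suc k) thus ?thesis
          by (simp only: FF_PY) (simp add: FF_def coeff_map_poly coeff_poly_shift)
      qed
    qed
    then show False using irred_factor[OF assms(3,4) _ not_unit_PY tdeg_PY] by blast
  qed
  have nz: "coeff f 0 \<noteq> 0"
  proof
    assume c0: "coeff f 0 = 0"
    let ?g = "poly_shift 1 f"
    have "f = PZ * ?g"
    proof (rule FF_eq)
      fix i j l
      show "FF f i j l = FF (PZ * ?g) i j l"
      proof (cases l)
        case 0 thus ?thesis using c0 by (simp only: FF_PZ) (simp add: FF_def)
      next
        case (Suc k) thus ?thesis
          by (simp only: FF_PZ) (simp add: FF_def coeff_poly_shift)
      qed
    qed
    then show False using irred_factor[OF assms(3,4) _ not_unit_PZ tdeg_PZ] by blast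
  qed
  have a3: "a3 = 0"
  proof -
    let ?L = "degree f"
    obtain j where j: "coeff (coeff f ?L) j \<noteq> 0" using f0 ex_coeff by (meson leading_coeff_neq_0)
    obtain i where i: "FF f i j ?L \<noteq> 0" using ex_coeff[OF j] by (auto simp: FF_def)
    have zz: "FF f ii jj (Suc (degree f)) = 0" for ii jj by (simp add: FF_big_l)
    have "a3 * FF f i j ?L = 0" using E[of i j "Suc (degree f)"] by (simp only: zz mult_zero_right if_cancel) simp
    then show ?thesis using i by simp
  qed
  have a2: "a2 = 0"
  proof (rule ccontr)
    assume a2: "a2 \<noteq> 0"
    obtain j1 l1 where j1: "FF f 0 j1 l1 \<noteq> 0" using nx by blast
    have "\<forall>n. FF f 0 (j1 + n) l1 \<noteq> 0"
    proof
      fix n show "FF f 0 (j1 + n) l1 \<noteq> 0"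
      proof (induction n)
        case 0 then show ?case using j1 by simp
      next
        case (Suc n)
        have "(0 - of_nat (Suc (j1 + n)) - ?b * of_nat l1 - a0) * FF f 0 (Suc (j1 + n)) l1
              - a2 * FF f 0 (j1 + n) l1 = 0"
          using E[of 0 "Suc (j1 + n)" l1] a3 by simp
        then show ?case using Suc a2 by auto
      qed
    qed
    then show False using FF_big_j[where p=f and l=l1 and i=0 and j="j1 + Suc (degree (coeff f l1))"] by (metis add_Suc_right lessI less_add_Suc2 add_Suc)
  qed
  have C: "\<exists>j. FF f 0 j l \<noteq> 0" if cl: "coeff f l \<noteq> 0" for l
  proof (rule ccontr)
    assume "\<not> ?thesis"
    hence z: "\<And>j. FF f 0 j l = 0" by auto
    obtain j' where j': "coeff (coeff f l) j' \<noteq> 0" using ex_coeff[OF cl] by blast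
    have ex: "\<exists>i j. FF f i j l \<noteq> 0" using ex_coeff[OF j'] by (auto simp: FF_def)
    define i0 where "i0 = (LEAST i. \<exists>j. FF f i j l \<noteq> 0)"
    have "\<exists>j. FF f i0 j l \<noteq> 0" unfolding i0_def by (rule LeastI_ex[OF ex])
    then obtain j where j: "FF f i0 j l \<noteq> 0" by blast
    have i0pos: "i0 \<noteq> 0" using z j by (metis)
    have below: "FF f (i0 - 1) jj l = 0" for jj
    proof -
      have "i0 - 1 < i0" using i0pos by simp
      then have "\<not> (\<exists>j. FF f (i0 - 1) j l \<noteq> 0)" unfolding i0_def by (rule not_less_Least)
      then show ?thesis by blast
    qed
    have "\<forall>n. FF f i0 (j + n) l \<noteq> 0"
    proof
      fix n show "FF f i0 (j + n) l \<noteq> 0"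
      proof (induction n)
        case 0 then show ?case using j by simp
      next
        case (Suc n)
        have "(of_nat i0 - of_nat (Suc (j + n)) - ?b * of_nat l - a0) * FF f i0 (Suc (j + n)) l
              - of_nat i0 * FF f i0 (j + n) l = 0"
          using E[of i0 "Suc (j + n)" l] a3 a2 below i0pos by simp
        then show ?case using Suc i0pos by auto
      qed
    qed
    then show False using FF_big_j[where p=f and l=l and i=i0 and j="j + Suc (degree (coeff f l))"] by (metis add_Suc_right lessI less_add_Suc2 add_Suc)
  qed
  have D: "a1 = of_nat j0 \<and> a0 + ?b * of_nat l = - of_nat j0" if h0: "FF f 0 j0 l \<noteq> 0" for l j0
  proof -
    have "(0 - of_nat j0 - ?b * of_nat l - a0) * FF f 0 j0 l = 0"
      using E[of 0 j0 l ] by (simp add: a2 a3 cong: if_cong)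
    then have "0 - of_nat j0 - ?b * of_nat l - a0 = 0" using h0 by (metis mult_eq_0_iff)
    then have k0: "a0 + ?b * of_nat l = - of_nat j0" by algebra
    have D2: "FF f 0 j l = 0" if "j \<noteq> j0" for j
    proof -
      have "(0 - of_nat j - ?b * of_nat l - a0) * FF f 0 j l = 0"
        using E[of 0 j l ] by (simp add: a2 a3 cong: if_cong)
      moreover have "0 - of_nat j - ?b * of_nat l - a0 = of_nat j0 - (of_nat j :: complex)"
        using k0 by (simp add: algebra_simps)
      moreover have "of_nat j0 - (of_nat j :: complex) \<noteq> 0" using that by simp
      ultimately show ?thesis by (metis mult_eq_0_iff)
    qed
    have D3: "j < j0 \<Longrightarrow> FF f 1 j l = 0" for j
    proof (induction j)
      case 0
      have "(1 - 0 - ?b * of_nat l - a0) * FF f 1 0 l + (0 - a1) * FF f 0 0 l = 0"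
        using E[of 1 0 l ] by (simp add: a2 a3 cong: if_cong)
      moreover have "FF f 0 0 l = 0" using D2 0 by simp
      moreover have "1 - 0 - ?b * of_nat l - a0 = of_nat (Suc j0)" using k0 by (simp add: algebra_simps)
      ultimately have "of_nat (Suc j0) * FF f 1 0 l = (0::complex)"
        by (metis mult_zero_right add.right_neutral)
      then show ?case using of_nat_neq_0 by (metis mult_eq_0_iff)
    next
      case (Suc j)
      have "(1 - of_nat (Suc j) - ?b * of_nat l - a0) * FF f 1 (Suc j) l
         + (of_nat (Suc j) - a1) * FF f 0 (Suc j) l - FF f 1 j l = 0"
        using E[of 1 "Suc j" l ] by (simp add: a2 a3 cong: if_cong)
      moreover have "FF f 0 (Suc j) l = 0" using D2 Suc by simp
      moreover have "FF f 1 j l = 0" using Suc by simp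
      moreover have "1 - of_nat (Suc j) - ?b * of_nat l - a0 = of_nat (j0 - j)"
        using k0 Suc.prems by (simp add: algebra_simps of_nat_diff)
      ultimately have "of_nat (j0 - j) * FF f 1 (Suc j) l = (0::complex)"
        by (metis mult_zero_right add.right_neutral diff_zero)
      moreover have "j0 - j \<noteq> 0" using Suc.prems by simp
      ultimately show ?case by simp
    qed
    have D4: "FF f 1 j0 l = 0"
    proof -
      have "(1 - of_nat (Suc j0) - ?b * of_nat l - a0) * FF f 1 (Suc j0) l
         + (of_nat (Suc j0) - a1) * FF f 0 (Suc j0) l - FF f 1 j0 l = 0"
        using E[of 1 "Suc j0" l ] by (simp add: a2 a3 cong: if_cong)
      moreover have "FF f 0 (Suc j0) l = 0" using D2 by simp
      moreover have "1 - of_nat (Suc j0) - ?b * of_nat l - a0 = 0"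
        using k0 by (simp add: algebra_simps)
      ultimately show ?thesis
        by (metis mult_zero_left mult_zero_right add.right_neutral add.left_neutral diff_0 neg_equal_0_iff_equal)
    qed
    have "(of_nat j0 - a1) * FF f 0 j0 l = 0"
    proof (cases j0)
      case 0
      then show ?thesis using E[of 1 j0 l] D4 by (simp add: a2 a3 cong: if_cong)
    next
      case (Suc k)
      then show ?thesis using E[of 1 j0 l] D4 D3[of k] by (simp add: a2 a3 cong: if_cong)
    qed
    then have "a1 = of_nat j0" using h0 by (metis mult_eq_0_iff right_minus_eq)
    then show ?thesis using k0 by simp
  qed
  have a1: "a1 = 0"
  proof -
    obtain i1 l1 where i1: "FF f i1 0 l1 \<noteq> 0" using ny by blast
    define i' where "i' = (LEAST i. FF f i 0 l1 \<noteq> 0)"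
    have hi: "FF f i' 0 l1 \<noteq> 0" unfolding i'_def by (rule LeastI[of _ i1]) (rule i1)
    have below: "i' \<noteq> 0 \<Longrightarrow> FF f (i' - 1) 0 l1 = 0"
    proof -
      assume "i' \<noteq> 0"
      then have "i' - 1 < i'" by simp
      then show ?thesis unfolding i'_def using not_less_Least by blast
    qed
    have "(of_nat i' - ?b * of_nat l1 - a0) * FF f i' 0 l1 = 0"
      using E[of i' 0 l1] below by (cases "i' = 0") (simp_all add: a2 a3 cong: if_cong)
    then have "of_nat i' - ?b * of_nat l1 - a0 = 0" using hi by (metis mult_eq_0_iff)
    then have k: "a0 + ?b * of_nat l1 = of_nat i'" by algebra
    have "coeff f l1 \<noteq> 0" using hi by (auto simp: FF_def)
    then obtain j0 where "FF f 0 j0 l1 \<noteq> 0" using C by blast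
    from D[OF this] k have e1: "of_nat i' = - (of_nat j0 :: complex)" and e2: "a1 = of_nat j0" by auto
    have "(of_nat (i' + j0) :: complex) = 0" using e1 by simp
    then have "i' + j0 = 0" using of_nat_eq_0_iff by blast
    then show ?thesis using e2 by simp
  qed
  have a0: "a0 = 0"
  proof -
    obtain j0 where "FF f 0 j0 0 \<noteq> 0" using C[OF nz] by blast
    from D[OF this] a1 show ?thesis by simp
  qed
  show ?thesis using a0 a1 a2 a3 by simp
qed

end
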